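(* Let $F$ and $G$ be experiments on the state space $\Theta=\{\theta_0,\ldots,\theta_n\}$. Then $F\succeq_{\textup{LB}}G$ if and only if $\mathcal{Z}(F)\supseteq\mathcal{Z}(G)$.
   Context: States: $\Theta=\{\theta_0,\ldots,\theta_n\}\subset\mathbb{R}$. An experiment $F$ specifies, for each $\theta$, an absolutely continuous distribution $F(\cdot\mid\theta)$ with density $f(\cdot\mid\theta)$ of a signal $X$ in a compact interval $\mathcal{X}$; likewise $G$ with densities $g(\cdot\mid\theta)$ on a compact interval $\mathcal{Y}$. Let $\widehat{\Delta}_n=\{\boldsymbol{q}\in[0,1]^n:\sum_iq_i\le1\}$; prior $\boldsymbol{q}$ puts mass $q_i$ on $\theta_i$ ($i\ge1$), $q_0=1-\sum_iq_i$ on $\theta_0$. Posterior $p_{F,i}(x;\boldsymbol{q})=q_if(x\mid\theta_i)/\sum_jq_jf(x\mid\theta_j)$, $\boldsymbol{p}_F(\boldsymbol{q})=(p_{F,1},\ldots,p_{F,n})(X;\boldsymbol{q})$ with $X\sim\sum_jq_jF(\cdot\mid\theta_j)$ (analogously for $G$). $\boldsymbol{\mu}\succeq_{\textup{lcx}}\boldsymbol{\nu}$ means $\mathbb{E}[C(\boldsymbol{b}\cdot\boldsymbol{\mu})]\ge\mathbb{E}[C(\boldsymbol{b}\cdot\boldsymbol{\nu})]$ for all $\boldsymbol{b}\in\mathbb{R}^n$ and all convex $C:\mathbb{R}\to\mathbb{R}$. $F\succeq_{\textup{LB}}G$ means $\boldsymbol{p}_F(\boldsymbol{q})\succeq_{\textup{lcx}}\boldsymbol{p}_G(\boldsymbol{q})$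 for all $\boldsymbol{q}\in\widehat{\Delta}_n$. Lorenz zonoid: let $\mathcal{H}_F$ be the set of Borel-measurable $h:\mathcal{X}\to[0,1]$, $\boldsymbol{z}_F(h)=\big(\int_{\mathcal{X}}h\,dF(\cdot\mid\theta_0),\ldots,\int_{\mathcal{X}}h\,dF(\cdot\mid\theta_n)\big)\in[0,1]^{n+1}$, and $\mathcal{Z}(F)=\{\boldsymbol{z}_F(h):h\in\mathcal{H}_F\}$; $\mathcal{Z}(G)$ is defined analogously. *)

theory Defs
  imports "HOL-Analysis.Analysis"
begin

text \<open>States are indexed 0..n. An experiment on the compact interval [a,b] is given by
  densities f i (i = 0..n) with respect to Lebesgue measure on [a,b].\<close>

definition is_experiment :: "nat \<Rightarrow> real \<Rightarrow> real \<Rightarrow> (nat \<Rightarrow> real \<Rightarrow> real) \<Rightarrow> bool" where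
  "is_experiment n a b f \<longleftrightarrow> a \<le> b \<and>
     (\<forall>i\<le>n. f i \<in> borel_measurable lborel \<and> (\<forall>x\<in>{a..b}. 0 \<le> f i x) \<and>
        set_integrable lborel {a..b} (f i) \<and> (LINT x:{a..b}|lborel. f i x) = 1)"

text \<open>Priors: q restricted to indices 1..n ranges over the set hat-Delta_n.\<close>
definition prior_set :: "nat \<Rightarrow> (nat \<Rightarrow> real) set" where
  "prior_set n = {q. (\<forall>i\<in>{1..n}. 0 \<le> q i \<and> q i \<le> 1) \<and> (\<Sum>i=1..n. q i) \<le> 1}"

definition prior :: "nat \<Rightarrow> (nat \<Rightarrow> real) \<Rightarrow> nat \<Rightarrow> real" where
  "prior n q i = (if i = 0 then 1 - (\<Sum>j=1..n. q j) else q i)"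

definition mix :: "nat \<Rightarrow> (nat \<Rightarrow> real \<Rightarrow> real) \<Rightarrow> (nat \<Rightarrow> real) \<Rightarrow> real \<Rightarrow> real" where
  "mix n f q x = (\<Sum>j=0..n. prior n q j * f j x)"

definition posterior :: "nat \<Rightarrow> (nat \<Rightarrow> real \<Rightarrow> real) \<Rightarrow> (nat \<Rightarrow> real) \<Rightarrow> nat \<Rightarrow> real \<Rightarrow> real" where
  "posterior n f q i x = prior n q i * f i x / mix n f q x"

text \<open>E[C(b . p_F(q))] where X has the mixture distribution on [a,b].\<close>
definition lcx_expect ::
  "nat \<Rightarrow> real \<Rightarrow> real \<Rightarrow> (nat \<Rightarrow> real \<Rightarrow> real) \<Rightarrow> (nat \<Rightarrow> real) \<Rightarrow> (nat \<Rightarrow> real) \<Rightarrow> (real \<Rightarrow> real) \<Rightarrow> real" where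
  "lcx_expect n a b f q \<beta> C =
     (LINT x:{a..b}|lborel. C (\<Sum>i=1..n. \<beta> i * posterior n f q i x) * mix n f q x)"

definition LB_ge ::
  "nat \<Rightarrow> real \<Rightarrow> real \<Rightarrow> (nat \<Rightarrow> real \<Rightarrow> real) \<Rightarrow> real \<Rightarrow> real \<Rightarrow> (nat \<Rightarrow> real \<Rightarrow> real) \<Rightarrow> bool" where
  "LB_ge n a b f c d g \<longleftrightarrow>
     (\<forall>q\<in>prior_set n. \<forall>\<beta>::nat \<Rightarrow> real. \<forall>C::real \<Rightarrow> real. convex_on UNIV C \<longrightarrow>
        lcx_expect n a b f q \<beta> C \<ge> lcx_expect n c d g q \<beta> C)"

text \<open>Lorenz zonoid, points of [0,1]^(n+1) represented as lists of length n+1.\<close>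
definition lorenz_zonoid :: "nat \<Rightarrow> real \<Rightarrow> real \<Rightarrow> (nat \<Rightarrow> real \<Rightarrow> real) \<Rightarrow> real list set" where
  "lorenz_zonoid n a b f =
     {map (\<lambda>i. LINT x:{a..b}|lborel. h x * f i x) [0..<Suc n] | h.
        h \<in> borel_measurable lborel \<and> (\<forall>x\<in>{a..b}. 0 \<le> h x \<and> h x \<le> 1)}"

end

theory Submission
  imports Defs
begin


definition zv :: "real \<Rightarrow> real \<Rightarrow> (nat \<Rightarrow> real \<Rightarrow> real) \<Rightarrow> (real \<Rightarrow> real) \<Rightarrow> nat \<Rightarrow> real" where
  "zv a b f h i = (LINT x:{a..b}|lborel. h x * f i x)"

definition sig :: "nat \<Rightarrow> real \<Rightarrow> real \<Rightarrow> (nat \<Rightarrow> real \<Rightarrow> real) \<Rightarrow> (nat \<Rightarrow> real) \<Rightarrow> real" where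
  "sig n a b f w = (LINT x:{a..b}|lborel. max 0 (\<Sum>j\<le>n. w j * f j x))"

lemma expD:
  assumes "is_experiment n a b f" "i \<le> n"
  shows "f i \<in> borel_measurable lborel" "\<And>x. x \<in> {a..b} \<Longrightarrow> 0 \<le> f i x"
    "set_integrable lborel {a..b} (f i)" "(LINT x:{a..b}|lborel. f i x) = 1" "a \<le> b"
  using assms unfolding is_experiment_def by auto

lemma si_sum:
  fixes f :: "nat \<Rightarrow> real \<Rightarrow> real"
  assumes "finite I" "\<And>i. i \<in> I \<Longrightarrow> set_integrable M A (f i)"
  shows "(LINT x:A|M. (\<Sum>i\<in>I. f i x)) = (\<Sum>i\<in>I. LINT x:A|M. f i x)"
    "set_integrable M A (\<lambda>x. \<Sum>i\<in>I. f i x)"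
proof -
  have "(LINT x:A|M. (\<Sum>i\<in>I. f i x)) = (LINT x|M. (\<Sum>i\<in>I. indicator A x * f i x))"
    unfolding set_lebesgue_integral_def by (simp add: sum_distrib_left)
  also have "\<dots> = (\<Sum>i\<in>I. LINT x|M. indicator A x * f i x)"
  proof -
    have "\<And>i. i \<in> I \<Longrightarrow> integrable M (\<lambda>x. indicator A x * f i x)"
      using assms by (auto simp: set_integrable_def)
    from Bochner_Integration.integral_sum[where I=I and M=M and f="\<lambda>i x. indicator A x * f i x", OF this] show ?thesis by simp
  qed
  finally show "(LINT x:A|M. (\<Sum>i\<in>I. f i x)) = (\<Sum>i\<in>I. LINT x:A|M. f i x)"
    by (simp add: set_lebesgue_integral_def)
  have "integrable M (\<lambda>x. \<Sum>i\<in>I. indicator A x * f i x)"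
    by (rule Bochner_Integration.integrable_sum) (use assms in \<open>auto simp: set_integrable_def\<close>)
  then show "set_integrable M A (\<lambda>x. \<Sum>i\<in>I. f i x)"
    unfolding set_integrable_def by (simp add: sum_distrib_left)
qed

lemma si_bound:
  fixes g v :: "real \<Rightarrow> real"
  assumes "set_integrable lborel A g" "v \<in> borel_measurable lborel" "A \<in> sets lborel"
    "\<And>x. x \<in> A \<Longrightarrow> \<bar>v x\<bar> \<le> K * g x"
  shows "set_integrable lborel A v"
proof (rule set_integrable_bound[where f="\<lambda>x. K * g x"])
  show "set_integrable lborel A (\<lambda>x. K * g x)" using assms(1) by simp
  show "set_borel_measurable lborel A v" unfolding set_borel_measurable_def
    using assms(2,3) by measurable
  show "AE x in lborel. x \<in> A \<longrightarrow> norm (v x) \<le> norm (K * g x)"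
    using assms(4) by (auto intro!: AE_I2) (smt (verit) real_norm_def)
qed

lemma int_hf:
  assumes "is_experiment n a b f" "i \<le> n" "h \<in> borel_measurable lborel"
    "\<And>x. x \<in> {a..b} \<Longrightarrow> \<bar>h x\<bar> \<le> K"
  shows "set_integrable lborel {a..b} (\<lambda>x. h x * f i x)"
proof (rule si_bound[where g="f i" and K=K])
  show "set_integrable lborel {a..b} (f i)" using expD[OF assms(1,2)] by auto
  show "(\<lambda>x. h x * f i x) \<in> borel_measurable lborel" using expD[OF assms(1,2)] assms(3) by measurable
  fix x assume x: "x \<in> {a..b}"
  have "0 \<le> f i x" using expD(2)[OF assms(1,2) x] .
  then show "\<bar>h x * f i x\<bar> \<le> K * f i x" using assms(4)[OF x]
    by (simp add: abs_mult mult_right_mono)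
qed auto

lemma int_comb:
  assumes "is_experiment n a b f" "h \<in> borel_measurable lborel"
    "\<And>x. x \<in> {a..b} \<Longrightarrow> \<bar>h x\<bar> \<le> K"
  shows "set_integrable lborel {a..b} (\<lambda>x. h x * (\<Sum>j\<le>n. w j * f j x))"
    "(\<Sum>j\<le>n. w j * zv a b f h j) = (LINT x:{a..b}|lborel. h x * (\<Sum>j\<le>n. w j * f j x))"
proof -
  have "\<And>j. j \<in> {..n} \<Longrightarrow> set_integrable lborel {a..b} (\<lambda>x. w j * (h x * f j x))"
    using int_hf[OF assms(1) _ assms(2,3)] by auto
  note S = si_sum[OF finite_atMost this]
  have e: "\<And>x. h x * (\<Sum>j\<le>n. w j * f j x) = (\<Sum>j\<le>n. w j * (h x * f j x))"
    by (simp add: sum_distrib_left algebra_simps)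
  show "set_integrable lborel {a..b} (\<lambda>x. h x * (\<Sum>j\<le>n. w j * f j x))"
    unfolding e by (rule S(2))
  show "(\<Sum>j\<le>n. w j * zv a b f h j) = (LINT x:{a..b}|lborel. h x * (\<Sum>j\<le>n. w j * f j x))"
  proof -
    have "(LINT x:{a..b}|lborel. (\<Sum>j\<le>n. w j * (h x * f j x))) = (\<Sum>j\<le>n. LINT x:{a..b}|lborel. w j * (h x * f j x))"
      by (rule S(1))
    then show ?thesis unfolding e zv_def by simp
  qed
qed

lemma int_pos:
  assumes "is_experiment n a b f"
  shows "set_integrable lborel {a..b} (\<lambda>x. max 0 (\<Sum>j\<le>n. w j * f j x))"
proof (rule si_bound[where g="\<lambda>x. \<Sum>j\<le>n. \<bar>w j\<bar> * f j x" and K=1])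
  show "set_integrable lborel {a..b} (\<lambda>x. \<Sum>j\<le>n. \<bar>w j\<bar> * f j x)"
    using expD[OF assms] by (intro si_sum) auto
  show "(\<lambda>x. max 0 (\<Sum>j\<le>n. w j * f j x)) \<in> borel_measurable lborel"
    using expD[OF assms] by measurable
  fix x assume x: "x \<in> {a..b}"
  have "\<bar>\<Sum>j\<le>n. w j * f j x\<bar> \<le> (\<Sum>j\<le>n. \<bar>w j\<bar> * f j x)"
    by (rule order_trans[OF sum_abs]) (use expD(2)[OF assms _ x] in \<open>auto simp: abs_mult\<close>)
  then show "\<bar>max 0 (\<Sum>j\<le>n. w j * f j x)\<bar> \<le> 1 * (\<Sum>j\<le>n. \<bar>w j\<bar> * f j x)" by auto
qed auto

lemma supp_le:
  assumes "is_experiment n a b f" "h \<in> borel_measurable lborel"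
    "\<And>x. x \<in> {a..b} \<Longrightarrow> 0 \<le> h x \<and> h x \<le> 1"
  shows "(\<Sum>j\<le>n. w j * zv a b f h j) \<le> sig n a b f w"
proof -
  have hb: "\<And>x. x \<in> {a..b} \<Longrightarrow> \<bar>h x\<bar> \<le> 1" using assms(3) by force
  have "(\<Sum>j\<le>n. w j * zv a b f h j) = (LINT x:{a..b}|lborel. h x * (\<Sum>j\<le>n. w j * f j x))"
    by (rule int_comb(2)[OF assms(1,2) hb])
  also have "\<dots> \<le> sig n a b f w" unfolding sig_def
  proof (rule set_integral_mono)
    show "set_integrable lborel {a..b} (\<lambda>x. h x * (\<Sum>j\<le>n. w j * f j x))"
      by (rule int_comb(1)[OF assms(1,2) hb])
    show "set_integrable lborel {a..b} (\<lambda>x. max 0 (\<Sum>j\<le>n. w j * f j x))"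
      by (rule int_pos[OF assms(1)])
    fix x assume x: "x \<in> {a..b}"
    show "h x * (\<Sum>j\<le>n. w j * f j x) \<le> max 0 (\<Sum>j\<le>n. w j * f j x)"
      using assms(3)[OF x]
      by (cases "0 \<le> (\<Sum>j\<le>n. w j * f j x)")
        (auto simp: mult_left_le_one_le mult_nonneg_nonpos mult_nonneg_nonpos2 intro: order_trans[OF _ max.cobounded2])
  qed
  finally show ?thesis .
qed

definition hopt :: "nat \<Rightarrow> (nat \<Rightarrow> real \<Rightarrow> real) \<Rightarrow> (nat \<Rightarrow> real) \<Rightarrow> real \<Rightarrow> real" where
  "hopt n f w x = (if 0 < (\<Sum>j\<le>n. w j * f j x) then 1 else 0)"

lemma hopt:
  assumes "is_experiment n a b f"
  shows "hopt n f w \<in> borel_measurable lborel" "\<And>x. 0 \<le> hopt n f w x \<and> hopt n f w x \<le> 1"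
    "(\<Sum>j\<le>n. w j * zv a b f (hopt n f w) j) = sig n a b f w"
proof -
  show m: "hopt n f w \<in> borel_measurable lborel"
    unfolding hopt_def using expD[OF assms] by measurable
  show "\<And>x. 0 \<le> hopt n f w x \<and> hopt n f w x \<le> 1" by (auto simp: hopt_def)
  have hb: "\<And>x. x \<in> {a..b} \<Longrightarrow> \<bar>hopt n f w x\<bar> \<le> 1" by (auto simp: hopt_def)
  show "(\<Sum>j\<le>n. w j * zv a b f (hopt n f w) j) = sig n a b f w"
    unfolding sig_def
  proof (rule trans[OF int_comb(2)[OF assms m hb]])
    show "(LINT x:{a..b}|lborel. hopt n f w x * (\<Sum>j\<le>n. w j * f j x)) = (LINT x:{a..b}|lborel. max 0 (\<Sum>j\<le>n. w j * f j x))"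
      by (rule set_lebesgue_integral_cong) (auto simp: hopt_def)
  qed
qed

lemma zon_sig:
  assumes F: "is_experiment n a b f" and G: "is_experiment n c d g"
    and inc: "lorenz_zonoid n c d g \<subseteq> lorenz_zonoid n a b f"
  shows "sig n c d g w \<le> sig n a b f w"
proof -
  let ?h = "hopt n g w"
  have "map (\<lambda>i. LINT x:{c..d}|lborel. ?h x * g i x) [0..<Suc n] \<in> lorenz_zonoid n c d g"
    unfolding lorenz_zonoid_def using hopt(1,2)[OF G] by blast
  with inc obtain h where h: "h \<in> borel_measurable lborel" "\<forall>x\<in>{a..b}. 0 \<le> h x \<and> h x \<le> 1"
    and eq: "map (\<lambda>i. LINT x:{c..d}|lborel. ?h x * g i x) [0..<Suc n] = map (\<lambda>i. LINT x:{a..b}|lborel. h x * f i x) [0..<Suc n]"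
    unfolding lorenz_zonoid_def by blast
  from eq have eq': "\<And>i. i \<le> n \<Longrightarrow> zv c d g ?h i = zv a b f h i"
    unfolding zv_def map_eq_conv by auto
  have "sig n c d g w = (\<Sum>j\<le>n. w j * zv c d g ?h j)" using hopt(3)[OF G] by simp
  also have "\<dots> = (\<Sum>j\<le>n. w j * zv a b f h j)" using eq' by simp
  also have "\<dots> \<le> sig n a b f w" by (rule supp_le[OF F h(1)]) (use h(2) in auto)
  finally show ?thesis .
qed

lemma sum_split0: "(\<Sum>j\<le>(n::nat). g j) = g 0 + (\<Sum>j=1..n. (g j::real))"
proof -
  have "{..n} = insert 0 {1..n}" by auto
  then show ?thesis by simp
qed

lemma alg1:
  fixes M :: real and f w :: "nat \<Rightarrow> real"
  assumes "M = (\<Sum>j\<le>n. f j)" "M > 0"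
  shows "max 0 ((\<Sum>i=1..n. (w i - w 0) * (f i / M)) + w 0) * M = max 0 (\<Sum>j\<le>n. w j * f j)"
proof -
  have "(\<Sum>i=1..n. (w i - w 0) * (f i / M)) = ((\<Sum>i=1..n. w i * f i) - w 0 * (\<Sum>i=1..n. f i)) / M"
    by (simp add: sum_divide_distrib sum_distrib_left sum_subtractf diff_divide_distrib algebra_simps)
  then have "(\<Sum>i=1..n. (w i - w 0) * (f i / M)) * M = (\<Sum>i=1..n. w i * f i) - w 0 * (\<Sum>i=1..n. f i)"
    using assms(2) by simp
  moreover have "M = f 0 + (\<Sum>i=1..n. f i)" using assms(1) sum_split0[of f] by simp
  moreover have "(\<Sum>j\<le>n. w j * f j) = w 0 * f 0 + (\<Sum>i=1..n. w i * f i)" using sum_split0[of "\<lambda>j. w j * f j"] by simp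
  ultimately have "((\<Sum>i=1..n. (w i - w 0) * (f i / M)) + w 0) * M = (\<Sum>j\<le>n. w j * f j)"
    by (simp add: algebra_simps)
  moreover have "max 0 y * M = max 0 (y * M)" for y using assms(2)
    by (cases "y \<le> 0") (auto simp: max_def mult_le_0_iff zero_le_mult_iff)
  ultimately show ?thesis by simp
qed

lemma LB_sig:
  assumes F: "is_experiment n a b f" and G: "is_experiment n c d g"
    and LB: "LB_ge n a b f c d g"
  shows "sig n c d g w \<le> sig n a b f w"
proof -
  define qu :: "nat \<Rightarrow> real" where "qu = (\<lambda>i. 1 / real (Suc n))"
  define \<beta> where "\<beta> = (\<lambda>i. w i - w 0)"
  define C where "C = (\<lambda>t::real. max 0 (t + w 0))"
  have q: "qu \<in> prior_set n" unfolding prior_set_def qu_def by (auto simp: field_simps)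
  have pr: "prior n qu j = 1 / real (Suc n)" for j
    unfolding prior_def qu_def by (auto simp: field_simps)
  have C: "convex_on UNIV C" unfolding C_def
  proof (rule convex_onI)
    fix t x y :: real assume t: "0 < t" "t < 1"
    have e: "(1 - t) *\<^sub>R x + t *\<^sub>R y + w 0 = (1 - t) * (x + w 0) + t * (y + w 0)" by (simp add: algebra_simps)
    have "(1 - t) * (x + w 0) \<le> (1 - t) * max 0 (x + w 0)" using t by (intro mult_left_mono) auto
    moreover have "t * (y + w 0) \<le> t * max 0 (y + w 0)" using t by (intro mult_left_mono) auto
    moreover have "0 \<le> (1 - t) * max 0 (x + w 0)" "0 \<le> t * max 0 (y + w 0)" using t by auto
    ultimately show "max 0 ((1 - t) *\<^sub>R x + t *\<^sub>R y + w 0) \<le> (1 - t) * max 0 (x + w 0) + t * max 0 (y + w 0)"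
      unfolding e by linarith
  qed auto
  have key: "lcx_expect n a b f qu \<beta> C = sig n a b f w / real (Suc n)"
    if E: "is_experiment n a b f" for a b f
  proof -
    have "lcx_expect n a b f qu \<beta> C = (LINT x:{a..b}|lborel. max 0 (\<Sum>j\<le>n. w j * f j x) / real (Suc n))"
      unfolding lcx_expect_def
    proof (rule set_lebesgue_integral_cong)
      show "\<forall>x. x \<in> {a..b} \<longrightarrow> C (\<Sum>i = 1..n. \<beta> i * posterior n f qu i x) * mix n f qu x = max 0 (\<Sum>j\<le>n. w j * f j x) / real (Suc n)"
      proof (intro allI impI)
        fix x assume x: "x \<in> {a..b}"
        define M where "M = (\<Sum>j\<le>n. f j x)"
        have mix: "mix n f qu x = M / real (Suc n)" unfolding mix_def pr M_def
          by (simp add: atLeast0AtMost sum_divide_distrib)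
        have post: "posterior n f qu i x = f i x / M" for i
          unfolding posterior_def mix pr by simp
        show "C (\<Sum>i = 1..n. \<beta> i * posterior n f qu i x) * mix n f qu x = max 0 (\<Sum>j\<le>n. w j * f j x) / real (Suc n)"
        proof (cases "M = 0")
          case True
          then have "\<forall>j\<in>{..n}. f j x = 0" unfolding M_def
            using sum_nonneg_eq_0_iff[of "{..n}" "\<lambda>j. f j x"] expD(2)[OF E _ x] by auto
          then show ?thesis using True mix by simp
        next
          case False
          then have "M > 0" unfolding M_def using expD(2)[OF E _ x]
            by (metis atMost_iff order_le_less sum_nonneg)
          from alg1[OF M_def this, of w]
          show ?thesis unfolding C_def \<beta>_def post mix by simp
        qed
      qed
    qed simp
    then show ?thesis unfolding sig_def by simp
  qed
  have "lcx_expect n c d g qu \<beta> C \<le> lcx_expect n a b f qu \<beta> C"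
    using LB q C unfolding LB_ge_def by blast
  then show ?thesis unfolding key[OF F] key[OF G]
    by (simp add: divide_le_cancel add_pos_nonneg)
qed

definition HH :: "(real \<Rightarrow> real) set" where
  "HH = {h. h \<in> borel_measurable lborel \<and> (\<forall>x. 0 \<le> h x \<and> h x \<le> 1)}"

definition Nr :: "real \<Rightarrow> real \<Rightarrow> (real \<Rightarrow> real) \<Rightarrow> real" where
  "Nr a b h = (LINT x:{a..b}|lborel. (h x)\<^sup>2)"

definition DD :: "nat \<Rightarrow> real \<Rightarrow> real \<Rightarrow> (nat \<Rightarrow> real \<Rightarrow> real) \<Rightarrow> (nat \<Rightarrow> real) \<Rightarrow> (real \<Rightarrow> real) \<Rightarrow> real" where
  "DD n a b f z h = (\<Sum>j\<le>n. (zv a b f h j - z j)\<^sup>2)"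

lemma HH_comb:
  assumes "h1 \<in> HH" "h2 \<in> HH" "0 \<le> t" "t \<le> 1"
  shows "(\<lambda>x. (1 - t) * h1 x + t * h2 x) \<in> HH"
proof -
  have "0 \<le> (1 - t) * h1 x + t * h2 x \<and> (1 - t) * h1 x + t * h2 x \<le> 1" for x
  proof -
    have a: "0 \<le> h1 x" "h1 x \<le> 1" "0 \<le> h2 x" "h2 x \<le> 1" using assms(1,2) unfolding HH_def by auto
    have "(1 - t) * h1 x \<le> (1 - t)" "t * h2 x \<le> t" using a assms(3,4) by (auto simp: mult_left_le)
    then show ?thesis using a assms(3,4) by auto
  qed
  then show ?thesis using assms(1,2) unfolding HH_def by auto
qed

lemma set_integrable_one: "set_integrable lborel {a..b} (\<lambda>x::real. 1::real)"
  by (rule borel_integrable_atLeastAtMost') (auto intro: continuous_intros)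

lemma set_integrable_const': "set_integrable lborel {a..b} (\<lambda>x::real. c::real)"
  using set_integrable_mult_right[where a=c and f="\<lambda>x::real. 1::real", OF set_integrable_one] by simp

lemma set_integral_const': "(LINT x:{a..b}|lborel. (c::real)) = c * (LINT x:{(a::real)..b}|lborel. 1)"
  using set_integral_mult_right[where a=c and f="\<lambda>x::real. 1::real"] by simp

lemma int_bdd:
  fixes h :: "real \<Rightarrow> real"
  assumes "h \<in> borel_measurable lborel" "\<And>x. x \<in> {a..b} \<Longrightarrow> \<bar>h x\<bar> \<le> K"
  shows "set_integrable lborel {a..b} h"
  by (rule si_bound[OF set_integrable_one assms(1), where K=K]) (use assms(2) in auto)

context
  fixes n a b f
  assumes F: "is_experiment n a b f"
begin

lemma zv_comb:
  assumes "h1 \<in> HH" "h2 \<in> HH" "j \<le> n"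
  shows "zv a b f (\<lambda>x. \<alpha> * h1 x + \<beta> * h2 x) j = \<alpha> * zv a b f h1 j + \<beta> * zv a b f h2 j"
proof -
  have i1: "set_integrable lborel {a..b} (\<lambda>x. h1 x * f j x)"
    by (rule int_hf[OF F assms(3), of _ 1]) (use assms(1) in \<open>auto simp: HH_def\<close>)
  have i2: "set_integrable lborel {a..b} (\<lambda>x. h2 x * f j x)"
    by (rule int_hf[OF F assms(3), of _ 1]) (use assms(2) in \<open>auto simp: HH_def\<close>)
  have "zv a b f (\<lambda>x. \<alpha> * h1 x + \<beta> * h2 x) j = (LINT x:{a..b}|lborel. \<alpha> * (h1 x * f j x) + \<beta> * (h2 x * f j x))"
    unfolding zv_def by (simp add: algebra_simps)
  also have "\<dots> = \<alpha> * zv a b f h1 j + \<beta> * zv a b f h2 j"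
    unfolding zv_def using i1 i2 by (subst set_integral_add) auto
  finally show ?thesis .
qed

lemma DD_convex:
  assumes "h1 \<in> HH" "h2 \<in> HH" "0 \<le> t" "t \<le> 1"
  shows "DD n a b f z (\<lambda>x. (1 - t) * h1 x + t * h2 x) \<le> (1 - t) * DD n a b f z h1 + t * DD n a b f z h2"
proof -
  have "(zv a b f (\<lambda>x. (1 - t) * h1 x + t * h2 x) j - z j)\<^sup>2 \<le> (1 - t) * (zv a b f h1 j - z j)\<^sup>2 + t * (zv a b f h2 j - z j)\<^sup>2"
    if j: "j \<le> n" for j
  proof -
    define u where "u = zv a b f h1 j - z j"
    define v where "v = zv a b f h2 j - z j"
    have "zv a b f (\<lambda>x. (1 - t) * h1 x + t * h2 x) j - z j = (1 - t) * u + t * v"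
      unfolding u_def v_def zv_comb[OF assms(1,2) j] by (simp add: algebra_simps)
    moreover have "((1 - t) * u + t * v)\<^sup>2 \<le> (1 - t) * u\<^sup>2 + t * v\<^sup>2"
    proof -
      have "(1 - t) * u\<^sup>2 + t * v\<^sup>2 - ((1 - t) * u + t * v)\<^sup>2 = t * (1 - t) * (u - v)\<^sup>2"
        by (simp add: power2_eq_square algebra_simps)
      moreover have "0 \<le> t * (1 - t) * (u - v)\<^sup>2" using assms(3,4) by simp
      ultimately show ?thesis by linarith
    qed
    ultimately show ?thesis unfolding u_def v_def by simp
  qed
  then have "DD n a b f z (\<lambda>x. (1 - t) * h1 x + t * h2 x) \<le> (\<Sum>j\<le>n. (1 - t) * (zv a b f h1 j - z j)\<^sup>2 + t * (zv a b f h2 j - z j)\<^sup>2)"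
    unfolding DD_def by (intro sum_mono) auto
  also have "\<dots> = (1 - t) * DD n a b f z h1 + t * DD n a b f z h2"
    unfolding DD_def by (simp add: sum.distrib sum_distrib_left)
  finally show ?thesis .
qed

end

lemma Nr_int:
  assumes "h \<in> HH"
  shows "set_integrable lborel {a..b} (\<lambda>x. (h x)\<^sup>2)"
  by (rule int_bdd[of _ _ _ 1]) (use assms in \<open>auto simp: HH_def abs_square_le_1\<close>)

lemma Nr_bounds:
  assumes "h \<in> HH"
  shows "0 \<le> Nr a b h" "Nr a b h \<le> (LINT x:{a..b}|lborel. 1)"
proof -
  show "0 \<le> Nr a b h" unfolding Nr_def
    unfolding set_lebesgue_integral_def by (rule Bochner_Integration.integral_nonneg) auto
  show "Nr a b h \<le> (LINT x:{a..b}|lborel. 1)" unfolding Nr_def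
    by (rule set_integral_mono[OF Nr_int[OF assms] set_integrable_one])
      (use assms in \<open>auto simp: HH_def abs_square_le_1\<close>)
qed

lemma Nr_par:
  assumes "h1 \<in> HH" "h2 \<in> HH"
  shows "Nr a b (\<lambda>x. h1 x - h2 x) = 2 * Nr a b h1 + 2 * Nr a b h2 - 4 * Nr a b (\<lambda>x. (1 - 1/2) * h1 x + (1/2) * h2 x)"
proof -
  have i1: "set_integrable lborel {a..b} (\<lambda>x. h1 x * h2 x)"
    by (rule int_bdd[of _ _ _ 1]) (use assms in \<open>auto simp: HH_def abs_mult intro: mult_le_one\<close>)
  note i = Nr_int[OF assms(1)] Nr_int[OF assms(2)] i1
  have "Nr a b (\<lambda>x. h1 x - h2 x) = (LINT x:{a..b}|lborel. (h1 x)\<^sup>2 + (h2 x)\<^sup>2 - 2 * (h1 x * h2 x))"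
    unfolding Nr_def by (simp add: power2_eq_square algebra_simps)
  also have "\<dots> = Nr a b h1 + Nr a b h2 - 2 * (LINT x:{a..b}|lborel. h1 x * h2 x)"
    unfolding Nr_def using i by (simp add: set_integral_add set_integral_diff)
  finally have A: "Nr a b (\<lambda>x. h1 x - h2 x) = Nr a b h1 + Nr a b h2 - 2 * (LINT x:{a..b}|lborel. h1 x * h2 x)" .
  have "Nr a b (\<lambda>x. (1 - 1/2) * h1 x + (1/2) * h2 x) = (LINT x:{a..b}|lborel. (1/4) * (h1 x)\<^sup>2 + (1/4) * (h2 x)\<^sup>2 + (1/2) * (h1 x * h2 x))"
    unfolding Nr_def by (simp add: power2_eq_square algebra_simps)
  also have "\<dots> = (1/4) * Nr a b h1 + (1/4) * Nr a b h2 + (1/2) * (LINT x:{a..b}|lborel. h1 x * h2 x)"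
    unfolding Nr_def using i by (simp add: set_integral_add)
  finally have B: "Nr a b (\<lambda>x. (1 - 1/2) * h1 x + (1/2) * h2 x) = (1/4) * Nr a b h1 + (1/4) * Nr a b h2 + (1/2) * (LINT x:{a..b}|lborel. h1 x * h2 x)" .
  show ?thesis unfolding A B by (simp add: algebra_simps)
qed

lemma zv_conv:
  assumes F: "is_experiment n a b f" and hs: "\<And>i. hs i \<in> HH" and hh: "hh \<in> HH"
    and lim: "AE x in lborel. x \<in> {a..b} \<longrightarrow> (\<lambda>i. hs i x) \<longlonglongrightarrow> hh x"
    and j: "j \<le> n"
  shows "(\<lambda>i. zv a b f (hs i) j) \<longlonglongrightarrow> zv a b f hh j"
  unfolding zv_def set_lebesgue_integral_def
proof (rule integral_dominated_convergence[where w="\<lambda>x. indicator {a..b} x *\<^sub>R f j x"])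
  note E = expD[OF F j]
  have hhm: "hh \<in> borel_measurable lborel" using hh by (simp add: HH_def)
  have hsm: "hs i \<in> borel_measurable lborel" for i using hs[of i] by (simp add: HH_def)
  show "(\<lambda>x. indicat_real {a..b} x *\<^sub>R (hh x * f j x)) \<in> borel_measurable lborel"
    using hhm E(1) by measurable
  show "(\<lambda>x. indicat_real {a..b} x *\<^sub>R (hs i x * f j x)) \<in> borel_measurable lborel" for i
    using hsm[of i] E(1) by measurable
  show "integrable lborel (\<lambda>x. indicat_real {a..b} x *\<^sub>R f j x)"
    using E(3) unfolding set_integrable_def .
  show "AE x in lborel. (\<lambda>i. indicat_real {a..b} x *\<^sub>R (hs i x * f j x)) \<longlonglongrightarrow> indicat_real {a..b} x *\<^sub>R (hh x * f j x)"
    using lim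
  proof (rule eventually_mono)
    fix x assume x: "x \<in> {a..b} \<longrightarrow> (\<lambda>i. hs i x) \<longlonglongrightarrow> hh x"
    show "(\<lambda>i. indicat_real {a..b} x *\<^sub>R (hs i x * f j x)) \<longlonglongrightarrow> indicat_real {a..b} x *\<^sub>R (hh x * f j x)"
    proof (cases "x \<in> {a..b}")
      case True
      then show ?thesis using x by (simp add: tendsto_mult_right)
    next
      case False
      then show ?thesis by simp
    qed
  qed
  show "AE x in lborel. norm (indicat_real {a..b} x *\<^sub>R (hs i x * f j x)) \<le> indicat_real {a..b} x *\<^sub>R f j x" for i
  proof (rule AE_I2)
    fix x
    show "norm (indicat_real {a..b} x *\<^sub>R (hs i x * f j x)) \<le> indicat_real {a..b} x *\<^sub>R f j x"
    proof (cases "x \<in> {a..b}")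
      case True
      have "0 \<le> f j x" using E(2)[OF True] .
      moreover have "0 \<le> hs i x" "hs i x \<le> 1" using hs[of i] unfolding HH_def by auto
      ultimately show ?thesis using True by (simp add: abs_mult mult_left_le_one_le)
    next
      case False
      then show ?thesis by simp
    qed
  qed
qed

lemma L1_bound:
  fixes u :: "real \<Rightarrow> real"
  assumes "u \<in> borel_measurable lborel" "\<And>x. \<bar>u x\<bar> \<le> 1" "\<epsilon> > 0"
  shows "(LINT x:{a..b}|lborel. \<bar>u x\<bar>) \<le> Nr a b u / (2 * \<epsilon>) + \<epsilon> / 2 * (LINT x:{a..b}|lborel. 1)"
proof -
  have i1: "set_integrable lborel {a..b} (\<lambda>x. \<bar>u x\<bar>)"
    by (rule int_bdd[where K=1]) (use assms in auto)
  have i2: "set_integrable lborel {a..b} (\<lambda>x. (u x)\<^sup>2)"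
    by (rule int_bdd[where K=1]) (use assms in \<open>auto simp: abs_square_le_1\<close>)
  have "(LINT x:{a..b}|lborel. \<bar>u x\<bar>) \<le> (LINT x:{a..b}|lborel. (u x)\<^sup>2 / (2 * \<epsilon>) + \<epsilon> / 2 * 1)"
  proof (rule set_integral_mono[OF i1])
    show "set_integrable lborel {a..b} (\<lambda>x. (u x)\<^sup>2 / (2 * \<epsilon>) + \<epsilon> / 2 * 1)"
      using i2 set_integrable_const' by (intro set_integral_add(1)) auto
    fix x
    have "0 \<le> (\<bar>u x\<bar> - \<epsilon>)\<^sup>2" by simp
    then have "2 * \<epsilon> * \<bar>u x\<bar> \<le> (u x)\<^sup>2 + \<epsilon>\<^sup>2"
      by (simp add: power2_eq_square algebra_simps)
    then show "\<bar>u x\<bar> \<le> (u x)\<^sup>2 / (2 * \<epsilon>) + \<epsilon> / 2 * 1"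
      using assms(3) by (simp add: field_simps power2_eq_square)
  qed
  also have "\<dots> = Nr a b u / (2 * \<epsilon>) + \<epsilon> / 2 * (LINT x:{a..b}|lborel. 1)"
    unfolding Nr_def using i2 set_integrable_const' by (subst set_integral_add) (auto simp: set_integral_const'[of a b "\<epsilon>"])
  finally show ?thesis .
qed

lemma lin_aux: "(x::real) \<le> (1 - 1/2) * a + 1/2 * b \<Longrightarrow> a \<le> d + u \<Longrightarrow> b \<le> d + v \<Longrightarrow> u \<le> v \<Longrightarrow> x \<le> d + v"
  by (simp add: field_simps)

lemma lin_aux3: "(dk::real) \<le> nm \<Longrightarrow> nj \<le> dl + u \<Longrightarrow> nk \<le> dk + u \<Longrightarrow> 2*nj + 2*nk - 4*nm \<le> 2*(dl - dk) + 4*u"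
  by argo

lemma lin_aux2: "(x::real) < p + u \<Longrightarrow> p \<le> q \<Longrightarrow> u \<le> v \<Longrightarrow> x \<le> q + v"
  by linarith

lemma exists_min:
  assumes F: "is_experiment n a b f"
  shows "\<exists>hh\<in>HH. \<forall>g\<in>HH. DD n a b f z hh \<le> DD n a b f z g"
proof -
  let ?D = "DD n a b f z"
  define \<delta> where "\<delta> = Inf (?D ` HH)"
  have zero: "(\<lambda>_. 0) \<in> HH" unfolding HH_def by auto
  have Dnn: "0 \<le> ?D h" for h unfolding DD_def by (intro sum_nonneg) auto
  have bddD: "bdd_below (?D ` HH)" using Dnn by (intro bdd_belowI[where m=0]) auto
  have \<delta>le: "\<delta> \<le> ?D g" if "g \<in> HH" for g
    unfolding \<delta>_def using bddD that by (auto intro: cInf_lower)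
  define S where "S k = {h\<in>HH. ?D h \<le> \<delta> + inverse (real (Suc k))}" for k
  have Sne: "S k \<noteq> {}" for k
  proof -
    have ip: "0 < inverse (real (Suc k))" by simp
    have "Inf (?D ` HH) < \<delta> + inverse (real (Suc k))" unfolding \<delta>_def using ip by linarith
    moreover have ne: "?D ` HH \<noteq> {}" using zero by blast
    ultimately have "\<exists>y\<in>?D ` HH. y < \<delta> + inverse (real (Suc k))"
      using cInf_lessD[OF ne] unfolding \<delta>_def by blast
    then obtain h where h: "h \<in> HH" "?D h < \<delta> + inverse (real (Suc k))" by blast
    then have "h \<in> S k" unfolding S_def by simp
    then show ?thesis by blast
  qed
  have SHH: "S k \<subseteq> HH" for k unfolding S_def by auto
  have Smono: "S j \<subseteq> S k" if "k \<le> j" for k j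
  proof -
    have i: "inverse (real (Suc j)) \<le> inverse (real (Suc k))" using that by (simp add: le_imp_inverse_le)
    show ?thesis
    proof
      fix h assume "h \<in> S j"
      then have "h \<in> HH" "?D h \<le> \<delta> + inverse (real (Suc j))" unfolding S_def by auto
      moreover have "?D h \<le> \<delta> + inverse (real (Suc k))" using i calculation(2) by linarith
      ultimately show "h \<in> S k" unfolding S_def by blast
    qed
  qed
  define Kc where "Kc = (LINT x:{a..b}|lborel. (1::real))"
  have Kc0: "0 \<le> Kc" using Nr_bounds(1,2)[OF zero, of a b] unfolding Kc_def by linarith
  have bddN: "bdd_below (Nr a b ` S k)" for k using Nr_bounds(1) SHH by (intro bdd_belowI[where m=0]) blast
  define dk where "dk k = Inf (Nr a b ` S k)" for k
  have dk_le: "dk k \<le> Nr a b h" if "h \<in> S k" for k h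
    unfolding dk_def using bddN that by (auto intro: cInf_lower)
  have inc: "incseq dk"
  proof (rule incseq_SucI)
    fix k show "dk k \<le> dk (Suc k)" unfolding dk_def
      by (rule cInf_superset_mono) (use Sne bddN Smono[of k "Suc k"] in auto)
  qed
  have dkKc: "dk k \<le> Kc" for k
  proof -
    obtain h where "h \<in> S k" using Sne by blast
    then show ?thesis using dk_le[of h k] Nr_bounds(2)[of h a b] SHH unfolding Kc_def by force
  qed
  define dl where "dl = (SUP k. dk k)"
  have bddA: "bdd_above (range dk)" using dkKc by (intro bdd_aboveI[where M=Kc]) auto
  have dlim: "dk \<longlonglongrightarrow> dl" unfolding dl_def by (rule LIMSEQ_incseq_SUP[OF bddA inc])
  have dk_dl: "dk k \<le> dl" for k by (rule incseq_le[OF inc dlim])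
  have "\<forall>k. \<exists>h. h \<in> S k \<and> Nr a b h < dk k + inverse (real (Suc k))"
  proof
    fix k
    have ip: "0 < inverse (real (Suc k))" by simp
    have "Inf (Nr a b ` S k) < dk k + inverse (real (Suc k))" unfolding dk_def using ip by linarith
    moreover have ne: "Nr a b ` S k \<noteq> {}" using Sne[of k] by simp
    ultimately have "\<exists>y\<in>Nr a b ` S k. y < dk k + inverse (real (Suc k))"
      using cInf_lessD[OF ne] unfolding dk_def by blast
    then obtain y where y: "y \<in> Nr a b ` S k" "y < dk k + inverse (real (Suc k))" by blast
    from y(1) obtain h where "h \<in> S k" "y = Nr a b h" by blast
    then show "\<exists>h. h \<in> S k \<and> Nr a b h < dk k + inverse (real (Suc k))" using y(2) by blast
  qed
  from choice[OF this] obtain hs where hs0: "\<forall>k. hs k \<in> S k \<and> Nr a b (hs k) < dk k + inverse (real (Suc k))"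
    by blast
  then have hsS: "\<And>k. hs k \<in> S k" and hsN: "\<And>k. Nr a b (hs k) < dk k + inverse (real (Suc k))"
    by auto
  have hsH: "hs k \<in> HH" for k using hsS SHH by blast
  have hsm: "hs k \<in> borel_measurable lborel" for k using hsH[of k] by (simp add: HH_def)
  have hsb: "0 \<le> hs k x \<and> hs k x \<le> 1" for k x using hsH[of k] by (simp add: HH_def)
  define B where "B k = 2 * (dl - dk k) + 4 * inverse (real (Suc k))" for k
  have Cb: "Nr a b (\<lambda>x. hs j x - hs k x) \<le> B k" if kj: "k \<le> j" for k j
  proof -
    define m where "m = (\<lambda>x. (1 - 1/2) * hs j x + (1/2::real) * hs k x)"
    have half: "(0::real) \<le> 1/2" "(1/2::real) \<le> 1" by auto
    have mH: "m \<in> HH" unfolding m_def by (rule HH_comb[OF hsH[of j] hsH[of k] half])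
    have ij: "inverse (real (Suc j)) \<le> inverse (real (Suc k))" using kj by (simp add: le_imp_inverse_le)
    have D1: "?D m \<le> (1 - 1/2) * ?D (hs j) + (1/2) * ?D (hs k)"
      unfolding m_def by (rule DD_convex[OF F hsH[of j] hsH[of k] half])
    have D2: "?D (hs j) \<le> \<delta> + inverse (real (Suc j))" "?D (hs k) \<le> \<delta> + inverse (real (Suc k))"
      using hsS[of j] hsS[of k] unfolding S_def by blast+
    have "?D m \<le> \<delta> + inverse (real (Suc k))" by (rule lin_aux[OF D1 D2 ij])
    then have "m \<in> S k" unfolding S_def using mH by blast
    then have N1: "dk k \<le> Nr a b m" by (rule dk_le)
    have N2: "Nr a b (\<lambda>x. hs j x - hs k x) = 2 * Nr a b (hs j) + 2 * Nr a b (hs k) - 4 * Nr a b m"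
      unfolding m_def by (rule Nr_par[OF hsH hsH])
    have N3: "Nr a b (hs j) \<le> dl + inverse (real (Suc k))" by (rule lin_aux2[OF hsN[of j] dk_dl[of j] ij])
    have N4: "Nr a b (hs k) \<le> dk k + inverse (real (Suc k))" using hsN[of k] by linarith
    show ?thesis unfolding B_def N2 by (rule lin_aux3[OF N1 N3 N4])
  qed
  have Blim: "B \<longlonglongrightarrow> 0"
  proof -
    have "(\<lambda>k. 2 * (dl - dk k) + 4 * inverse (real (Suc k))) \<longlonglongrightarrow> 2 * (dl - dl) + 4 * 0"
      by (intro tendsto_intros dlim LIMSEQ_inverse_real_of_nat)
    then show ?thesis unfolding B_def by simp
  qed
  define s where "s k x = indicator {a..b} x * hs k x" for k x
  have sint: "integrable lborel (s k)" for k
  proof -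
    have "set_integrable lborel {a..b} (hs k)" by (rule int_bdd[where K=1]) (use hsm hsb in auto)
    then show ?thesis unfolding set_integrable_def s_def by simp
  qed
  have Ceq: "(LINT x|lborel. norm (s i x - s j x)) = (LINT x:{a..b}|lborel. \<bar>hs j x - hs i x\<bar>)" for i j
    unfolding set_lebesgue_integral_def s_def
    by (rule Bochner_Integration.integral_cong) (auto simp: indicator_def abs_minus_commute)
  have cauchy: "\<exists>N. \<forall>i\<ge>N. \<forall>j\<ge>N. (LINT x|lborel. norm (s i x - s j x)) < e" if e: "e > 0" for e
  proof -
    define \<epsilon> where "\<epsilon> = e / (2 * (Kc + 1))"
    have \<epsilon>: "\<epsilon> > 0" unfolding \<epsilon>_def using e Kc0 by simp
    have "eventually (\<lambda>k. B k < e * \<epsilon>) sequentially"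
      using Blim e \<epsilon> by (auto intro: order_tendstoD(2))
    then obtain N where N: "\<And>k. k \<ge> N \<Longrightarrow> B k < e * \<epsilon>" by (auto simp: eventually_sequentially)
    have key: "(LINT x:{a..b}|lborel. \<bar>hs j x - hs k x\<bar>) < e" if "N \<le> k" "k \<le> j" for j k
    proof -
      have "(LINT x:{a..b}|lborel. \<bar>hs j x - hs k x\<bar>) \<le> Nr a b (\<lambda>x. hs j x - hs k x) / (2 * \<epsilon>) + \<epsilon> / 2 * Kc"
        unfolding Kc_def
      proof (rule L1_bound[OF _ _ \<epsilon>])
        show "(\<lambda>x. hs j x - hs k x) \<in> borel_measurable lborel" using hsm by measurable
        fix x
        show "\<bar>hs j x - hs k x\<bar> \<le> 1" using hsb[of j x] hsb[of k x] by (simp add: abs_le_iff)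
      qed
      also have "\<dots> < e / 2 + e / 2"
      proof (rule add_less_le_mono)
        have "Nr a b (\<lambda>x. hs j x - hs k x) < e * \<epsilon>" using Cb[OF that(2)] N[OF that(1)] by linarith
        then show "Nr a b (\<lambda>x. hs j x - hs k x) / (2 * \<epsilon>) < e / 2" using \<epsilon> by (simp add: field_simps)
        have "\<epsilon> * Kc \<le> e" unfolding \<epsilon>_def using e Kc0 by (simp add: field_simps)
        then show "\<epsilon> / 2 * Kc \<le> e / 2" by simp
      qed
      finally show ?thesis by simp
    qed
    show ?thesis
    proof (intro exI allI impI)
      fix i j assume "N \<le> i" "N \<le> j"
      then show "(LINT x|lborel. norm (s i x - s j x)) < e"
        unfolding Ceq using key[of i j] key[of j i]
        by (cases "i \<le> j") (auto simp: abs_minus_commute)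
    qed
  qed
  obtain r where r: "strict_mono r" and aec: "AE x in lborel. Cauchy (\<lambda>i. s (r i) x)"
    using cauchy_L1_AE_cauchy_subseq[OF sint cauchy] by blast
  define hl where "hl x = lim (\<lambda>i. s (r i) x)" for x
  define hh where "hh x = max 0 (min 1 (hl x))" for x
  have sm: "s k \<in> borel_measurable lborel" for k unfolding s_def using hsm[of k] by measurable
  have hlm: "hl \<in> borel_measurable lborel" unfolding hl_def using sm by measurable
  have hhH: "hh \<in> HH" unfolding HH_def hh_def using hlm by auto
  have lim: "AE x in lborel. x \<in> {a..b} \<longrightarrow> (\<lambda>i. hs (r i) x) \<longlonglongrightarrow> hh x"
    using aec
  proof (rule eventually_mono, intro impI)
    fix x assume c: "Cauchy (\<lambda>i. s (r i) x)" and x: "x \<in> {a..b}"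
    have t: "(\<lambda>i. s (r i) x) \<longlonglongrightarrow> hl x" unfolding hl_def
      using c by (simp add: Cauchy_convergent_iff convergent_LIMSEQ_iff)
    have e: "s (r i) x = hs (r i) x" for i using x unfolding s_def by simp
    have t': "(\<lambda>i. hs (r i) x) \<longlonglongrightarrow> hl x" using t unfolding e .
    have "0 \<le> hl x" by (rule LIMSEQ_le_const[OF t']) (use hsb in auto)
    moreover have "hl x \<le> 1" by (rule LIMSEQ_le_const2[OF t']) (use hsb in auto)
    ultimately have "hh x = hl x" unfolding hh_def by simp
    then show "(\<lambda>i. hs (r i) x) \<longlonglongrightarrow> hh x" using t' by simp
  qed
  have zc: "(\<lambda>i. zv a b f (hs (r i)) j) \<longlonglongrightarrow> zv a b f hh j" if "j \<le> n" for j
    by (rule zv_conv[OF F hsH hhH lim that])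
  have Dc: "(\<lambda>i. ?D (hs (r i))) \<longlonglongrightarrow> ?D hh"
    unfolding DD_def by (intro tendsto_sum tendsto_power tendsto_diff tendsto_const zc) auto
  have Db: "?D (hs (r i)) \<le> \<delta> + inverse (real (Suc i))" for i
  proof -
    have "i \<le> r i" using seq_suble[OF r] .
    then have iv: "inverse (real (Suc (r i))) \<le> inverse (real (Suc i))" by (simp add: le_imp_inverse_le)
    have "?D (hs (r i)) \<le> \<delta> + inverse (real (Suc (r i)))" using hsS[of "r i"] unfolding S_def by blast
    then show ?thesis by (rule order_trans) (rule add_left_mono[OF iv])
  qed
  have "(\<lambda>i. \<delta> + inverse (real (Suc i))) \<longlonglongrightarrow> \<delta> + 0"
    by (intro tendsto_intros LIMSEQ_inverse_real_of_nat)
  then have "?D hh \<le> \<delta>" using LIMSEQ_le[OF Dc] Db by auto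
  then show ?thesis using hhH \<delta>le by force
qed

lemma point_in:
  assumes F: "is_experiment n a b f" and hz: "\<And>w. (\<Sum>j\<le>n. w j * z j) \<le> sig n a b f w"
  shows "\<exists>h\<in>HH. \<forall>j\<le>n. zv a b f h j = z j"
proof -
  obtain hh where hh: "hh \<in> HH" and mn: "\<And>g. g \<in> HH \<Longrightarrow> DD n a b f z hh \<le> DD n a b f z g"
    using exists_min[OF F, of z] by blast
  define e where "e j = zv a b f hh j - z j" for j
  have FO: "0 \<le> (\<Sum>j\<le>n. e j * (zv a b f g j - zv a b f hh j))" if g: "g \<in> HH" for g
  proof (rule ccontr)
    define d where "d j = zv a b f g j - zv a b f hh j" for j
    define S where "S = (\<Sum>j\<le>n. e j * d j)"
    define Q where "Q = (\<Sum>j\<le>n. (d j)\<^sup>2)"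
    assume "\<not> 0 \<le> (\<Sum>j\<le>n. e j * (zv a b f g j - zv a b f hh j))"
    then have S0: "S < 0" unfolding S_def d_def by simp
    have Q0: "0 \<le> Q" unfolding Q_def by (intro sum_nonneg) auto
    define t where "t = min 1 (- S / (Q + 1))"
    have "0 < - S / (Q + 1)" using S0 Q0 by (intro divide_pos_pos) auto
    then have t0: "0 < t" "t \<le> 1" unfolding t_def by auto
    have ht: "(\<lambda>x. (1 - t) * hh x + t * g x) \<in> HH" by (rule HH_comb[OF hh g]) (use t0 in auto)
    have zt: "zv a b f (\<lambda>x. (1 - t) * hh x + t * g x) j = zv a b f hh j + t * d j" if "j \<le> n" for j
      unfolding zv_comb[OF F hh g that] d_def by (simp add: algebra_simps)
    have "DD n a b f z (\<lambda>x. (1 - t) * hh x + t * g x) = (\<Sum>j\<le>n. (e j + t * d j)\<^sup>2)"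
      unfolding DD_def e_def using zt by (intro sum.cong) (auto simp: algebra_simps)
    also have "\<dots> = DD n a b f z hh + 2 * t * S + t\<^sup>2 * Q"
      unfolding DD_def e_def[symmetric] S_def Q_def
      by (simp add: power2_eq_square algebra_simps sum.distrib sum_distrib_left)
    finally have "DD n a b f z hh \<le> DD n a b f z hh + 2 * t * S + t\<^sup>2 * Q"
      using mn[OF ht] by simp
    then have "0 \<le> t * (2 * S + t * Q)" by (simp add: power2_eq_square algebra_simps)
    then have c: "0 \<le> 2 * S + t * Q" using t0 by (simp add: zero_le_mult_iff)
    have "t * Q \<le> (- S / (Q + 1)) * Q" unfolding t_def using Q0 by (intro mult_right_mono) auto
    also have "\<dots> = - S * (Q / (Q + 1))" by simp
    also have "\<dots> \<le> - S * 1" using S0 Q0 by (intro mult_left_mono) auto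
    finally have "t * Q \<le> - S" by simp
    then show False using c S0 by linarith
  qed
  define w where "w j = - e j" for j
  have A: "(\<Sum>j\<le>n. w j * z j) \<le> (\<Sum>j\<le>n. w j * zv a b f (hopt n f w) j)"
    using hz[of w] hopt(3)[OF F, of w] by simp
  have B: "0 \<le> (\<Sum>j\<le>n. e j * zv a b f (hopt n f w) j) - (\<Sum>j\<le>n. e j * zv a b f hh j)"
    using FO[of "hopt n f w"] hopt(1,2)[OF F, of w]
    by (simp add: HH_def sum_subtractf algebra_simps)
  have "(\<Sum>j\<le>n. (e j)\<^sup>2) = (\<Sum>j\<le>n. e j * zv a b f hh j) - (\<Sum>j\<le>n. e j * z j)"
    unfolding sum_subtractf[symmetric] by (intro sum.cong) (auto simp: e_def power2_eq_square algebra_simps)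
  also have "\<dots> \<le> 0" using A B unfolding w_def by (simp add: sum_negf)
  finally have "(\<Sum>j\<le>n. (e j)\<^sup>2) \<le> 0" .
  then have "(\<Sum>j\<le>n. (e j)\<^sup>2) = 0" by (simp add: antisym sum_nonneg)
  then have "\<forall>j\<in>{..n}. (e j)\<^sup>2 = 0" by (subst sum_nonneg_eq_0_iff[symmetric]) auto
  then show ?thesis using hh unfolding e_def by auto
qed

lemma pl_repr:
  fixes C :: "real \<Rightarrow> real" and L h :: real
  assumes h: "h > 0"
  defines "tt \<equiv> \<lambda>k::nat. L + real k * h"
  defines "sl \<equiv> \<lambda>k. (C (tt (Suc k)) - C (tt k)) / h"
  defines "Pm \<equiv> \<lambda>m t. C L + sl 0 * (t - L) + (\<Sum>k<m. (sl (Suc k) - sl k) * max 0 (t - tt (Suc k)))"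
  shows "t \<ge> tt m \<Longrightarrow> Pm m t = C (tt m) + sl m * (t - tt m)"
proof (induction m)
  case 0
  then show ?case unfolding Pm_def tt_def by simp
next
  case (Suc m)
  have le: "tt m \<le> tt (Suc m)" unfolding tt_def using h by simp
  then have IH: "Pm m t = C (tt m) + sl m * (t - tt m)" using Suc by simp
  have mx: "max 0 (t - tt (Suc m)) = t - tt (Suc m)" using Suc by simp
  have sh: "sl m * h = C (tt (Suc m)) - C (tt m)" unfolding sl_def using h by simp
  have d: "t - tt m = (t - tt (Suc m)) + h" unfolding tt_def by (simp add: algebra_simps)
  have "Pm (Suc m) t = Pm m t + (sl (Suc m) - sl m) * max 0 (t - tt (Suc m))"
    unfolding Pm_def by simp
  then have "Pm (Suc m) t = Pm m t + (sl (Suc m) - sl m) * (t - tt (Suc m))"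
    unfolding mx .
  also have "\<dots> = C (tt m) + sl m * h + sl (Suc m) * (t - tt (Suc m))"
    unfolding IH d by (simp add: algebra_simps)
  also have "\<dots> = C (tt (Suc m)) + sl (Suc m) * (t - tt (Suc m))" unfolding sh by simp
  finally show ?case .
qed

lemma pl_trunc:
  fixes C :: "real \<Rightarrow> real" and L h :: real
  assumes h: "h > 0" and mN: "m \<le> N" and t: "t \<le> L + real (Suc m) * h"
  shows "(\<Sum>k<N. (c k::real) * max 0 (t - (L + real (Suc k) * h))) = (\<Sum>k<m. c k * max 0 (t - (L + real (Suc k) * h)))"
proof (rule sum.mono_neutral_right)
  show "finite {..<N}" by simp
  show "{..<m} \<subseteq> {..<N}" using mN by auto
  show "\<forall>k\<in>{..<N} - {..<m}. c k * max 0 (t - (L + real (Suc k) * h)) = 0"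
  proof
    fix k assume k: "k \<in> {..<N} - {..<m}"
    then have "real (Suc m) \<le> real (Suc k)" by simp
    then have "real (Suc m) * h \<le> real (Suc k) * h" using h by (intro mult_right_mono) simp_all
    then have "t - (L + real (Suc k) * h) \<le> 0" using t by linarith
    then show "c k * max 0 (t - (L + real (Suc k) * h)) = 0" by (simp add: max_def)
  qed
qed

lemma approx_convex:
  fixes C :: "real \<Rightarrow> real"
  assumes conv: "convex_on UNIV C" and LU: "L < U" and e: "\<epsilon> > 0"
  shows "\<exists>\<alpha> \<gamma> (N::nat) c s. (\<forall>k<N. 0 \<le> c k) \<and>
     (\<forall>t\<in>{L..U}. \<bar>C t - (\<alpha> + \<gamma> * t + (\<Sum>k<N. c k * max 0 (t - s k)))\<bar> \<le> \<epsilon>)"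
proof -
  have "continuous_on UNIV C" by (rule convex_on_continuous[OF open_UNIV conv])
  then have "uniformly_continuous_on {L..U} C"
    by (intro compact_uniformly_continuous) (auto intro: continuous_on_subset)
  then have "\<exists>d>0. \<forall>x\<in>{L..U}. \<forall>x'\<in>{L..U}. dist x' x < d \<longrightarrow> dist (C x') (C x) < \<epsilon>"
    unfolding uniformly_continuous_on_def using e by blast
  then obtain d where d: "d > 0" and dC0: "\<forall>x\<in>{L..U}. \<forall>x'\<in>{L..U}. dist x' x < d \<longrightarrow> dist (C x') (C x) < \<epsilon>"
    by blast
  have dC: "\<And>x y. x \<in> {L..U} \<Longrightarrow> y \<in> {L..U} \<Longrightarrow> dist y x < d \<Longrightarrow> dist (C y) (C x) < \<epsilon>"
    using dC0 by blast
  obtain N :: nat where N: "(U - L) / d < real N" using reals_Archimedean2 by blast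
  have N0: "N > 0" using N LU d by (cases N) (auto simp: field_simps)
  define h where "h = (U - L) / real N"
  have h: "h > 0" unfolding h_def using LU N0 by simp
  have hd: "h < d" unfolding h_def using N N0 d by (simp add: field_simps)
  have hN: "L + real N * h = U" unfolding h_def using N0 by simp
  define tt where "tt = (\<lambda>k::nat. L + real k * h)"
  define sl where "sl = (\<lambda>k. (C (tt (Suc k)) - C (tt k)) / h)"
  define Pm where "Pm = (\<lambda>m t. C L + sl 0 * (t - L) + (\<Sum>k<m. (sl (Suc k) - sl k) * max 0 (t - tt (Suc k))))"
  have rep: "Pm m t = C (tt m) + sl m * (t - tt m)" if "t \<ge> tt m" for m t
    using pl_repr[OF h, of L m t C] that unfolding Pm_def sl_def tt_def by simp
  have slmono: "sl k \<le> sl (Suc k)" for k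
  proof -
    have mid: "tt (Suc k) = (1 - 1/2) *\<^sub>R tt k + (1/2) *\<^sub>R tt (Suc (Suc k))"
      unfolding tt_def by (simp add: algebra_simps)
    have "C (tt (Suc k)) \<le> (1 - 1/2) * C (tt k) + (1/2) * C (tt (Suc (Suc k)))"
      unfolding mid by (rule convex_onD[OF conv]) auto
    then have "C (tt (Suc k)) - C (tt k) \<le> C (tt (Suc (Suc k))) - C (tt (Suc k))" by simp
    then show ?thesis unfolding sl_def using h by (simp add: divide_right_mono)
  qed
  have c0: "\<forall>k<N - 1. 0 \<le> sl (Suc k) - sl k" using slmono by simp
  have err: "\<forall>t\<in>{L..U}. \<bar>C t - ((C L - sl 0 * L) + sl 0 * t + (\<Sum>k<N - 1. (sl (Suc k) - sl k) * max 0 (t - tt (Suc k))))\<bar> \<le> \<epsilon>"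
  proof
    fix t assume t: "t \<in> {L..U}"
    define k0 where "k0 = nat \<lfloor>(t - L) / h\<rfloor>"
    define m where "m = min k0 (N - 1)"
    have q0: "0 \<le> (t - L) / h" using t h by simp
    have k0le: "real k0 \<le> (t - L) / h" unfolding k0_def using q0 by linarith
    have k0gt: "(t - L) / h < real k0 + 1" unfolding k0_def using q0 by linarith
    have qN: "(t - L) / h \<le> real N" using t h hN by (simp add: field_simps)
    have mN: "m < N" unfolding m_def using N0 by simp
    have tm: "tt m \<le> t"
    proof -
      have "real m \<le> (t - L) / h" unfolding m_def using k0le by (simp add: min_def)
      then show ?thesis unfolding tt_def using h by (simp add: field_simps)
    qed
    have tm1: "t \<le> tt (Suc m)"
    proof (cases "k0 \<le> N - 1")
      case True
      then have "m = k0" unfolding m_def by simp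
      then have "(t - L) / h \<le> real (Suc m)" using k0gt by simp
      then show ?thesis unfolding tt_def using h by (simp add: field_simps)
    next
      case False
      then have "m = N - 1" unfolding m_def by simp
      then have "Suc m = N" using N0 by simp
      then show ?thesis unfolding tt_def using hN t by simp
    qed
    have P_eq: "C L + sl 0 * (t - L) + (\<Sum>k<N - 1. (sl (Suc k) - sl k) * max 0 (t - tt (Suc k))) = Pm m t"
      unfolding Pm_def tt_def
      using pl_trunc[OF h, of m "N - 1" t L "\<lambda>k. sl (Suc k) - sl k"] mN tm1 unfolding tt_def by simp
    have Pm_val: "Pm m t = C (tt m) + sl m * (t - tt m)" by (rule rep[OF tm])
    define lam where "lam = (t - tt m) / h"
    have l01: "0 \<le> lam" "lam \<le> 1"
    proof -
      show "0 \<le> lam" unfolding lam_def using tm h by simp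
      have "t - tt m \<le> h" using tm1 unfolding tt_def by (simp add: algebra_simps)
      then show "lam \<le> 1" unfolding lam_def using h by simp
    qed
    have cvx: "C (tt m) + sl m * (t - tt m) = (1 - lam) * C (tt m) + lam * C (tt (Suc m))"
      unfolding sl_def lam_def using h by (simp add: field_simps)
    have ttin: "tt m \<in> {L..U}" "tt (Suc m) \<in> {L..U}"
    proof -
      have "real m * h \<le> real N * h" "real (Suc m) * h \<le> real N * h" using mN h by (auto intro: mult_right_mono)
      then show "tt m \<in> {L..U}" "tt (Suc m) \<in> {L..U}" unfolding tt_def using h hN by auto
    qed
    have c1: "\<bar>C (tt m) - C t\<bar> < \<epsilon>"
    proof -
      have "dist (tt m) t < d" using tm tm1 hd unfolding dist_real_def tt_def by (simp add: algebra_simps)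
      then show ?thesis using dC[OF t ttin(1)] by (simp add: dist_real_def)
    qed
    have c2: "\<bar>C (tt (Suc m)) - C t\<bar> < \<epsilon>"
    proof -
      have "dist (tt (Suc m)) t < d" using tm tm1 hd unfolding dist_real_def tt_def by (simp add: algebra_simps)
      then show ?thesis using dC[OF t ttin(2)] by (simp add: dist_real_def)
    qed
    have "\<bar>C t - ((1 - lam) * C (tt m) + lam * C (tt (Suc m)))\<bar> = \<bar>(1 - lam) * (C (tt m) - C t) + lam * (C (tt (Suc m)) - C t)\<bar>"
      by (simp add: algebra_simps)
    also have "\<dots> \<le> \<bar>(1 - lam) * (C (tt m) - C t)\<bar> + \<bar>lam * (C (tt (Suc m)) - C t)\<bar>"
      by (rule abs_triangle_ineq)
    also have "\<dots> = (1 - lam) * \<bar>C (tt m) - C t\<bar> + lam * \<bar>C (tt (Suc m)) - C t\<bar>"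
      using l01 by (simp add: abs_mult)
    also have "\<dots> \<le> (1 - lam) * \<epsilon> + lam * \<epsilon>"
      using l01 c1 c2 by (intro add_mono mult_left_mono) auto
    also have "\<dots> = \<epsilon>" by (simp add: algebra_simps)
    finally have fin: "\<bar>C t - ((1 - lam) * C (tt m) + lam * C (tt (Suc m)))\<bar> \<le> \<epsilon>" .
    show "\<bar>C t - ((C L - sl 0 * L) + sl 0 * t + (\<Sum>k<N - 1. (sl (Suc k) - sl k) * max 0 (t - tt (Suc k))))\<bar> \<le> \<epsilon>"
      using fin P_eq Pm_val cvx by (simp add: algebra_simps)
  qed
  show ?thesis
    apply (rule exI)+
    by (rule conjI[OF c0 err])
qed

context
  fixes n a b f q and \<beta> :: "nat \<Rightarrow> real"
  assumes F: "is_experiment n a b f" and q: "q \<in> prior_set n"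
begin

lemma prior_nn: "j \<le> n \<Longrightarrow> 0 \<le> prior n q j"
  using q unfolding prior_set_def prior_def by (cases "j = 0") auto

lemma prior_sum: "(\<Sum>j\<le>n. prior n q j) = 1"
proof -
  have "(\<Sum>j=1..n. prior n q j) = (\<Sum>j=1..n. q j)" unfolding prior_def by (intro sum.cong) auto
  then show ?thesis unfolding sum_split0[of "prior n q"] by (simp add: prior_def)
qed

lemma mix_eq: "mix n f q x = (\<Sum>j\<le>n. prior n q j * f j x)"
  unfolding mix_def by (simp add: atLeast0AtMost)

lemma fm: "j \<le> n \<Longrightarrow> f j \<in> borel_measurable lborel" using expD(1)[OF F] .

lemma mix_meas: "mix n f q \<in> borel_measurable lborel"
  unfolding mix_eq[abs_def] using fm by measurable

lemma post_meas: "(\<lambda>x. posterior n f q i x) \<in> borel_measurable lborel" if "i \<le> n"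
  unfolding posterior_def using fm[OF that] mix_meas by measurable

lemma Y_meas: "(\<lambda>x. \<Sum>i=1..n. \<beta> i * posterior n f q i x) \<in> borel_measurable lborel"
  by (intro borel_measurable_sum borel_measurable_times borel_measurable_const post_meas) auto

lemma mix_nn: "x \<in> {a..b} \<Longrightarrow> 0 \<le> mix n f q x"
  unfolding mix_eq using prior_nn expD(2)[OF F] by (intro sum_nonneg) auto

lemma term_le: assumes "x \<in> {a..b}" "i \<le> n"
  shows "0 \<le> prior n q i * f i x" "prior n q i * f i x \<le> mix n f q x"
proof -
  show "0 \<le> prior n q i * f i x" using prior_nn[OF assms(2)] expD(2)[OF F assms(2,1)] by simp
  show "prior n q i * f i x \<le> mix n f q x" unfolding mix_eq
    using assms prior_nn expD(2)[OF F _ assms(1)]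
    by (intro member_le_sum[where f="\<lambda>j. prior n q j * f j x"]) auto
qed

lemma post01: assumes "x \<in> {a..b}" "i \<le> n"
  shows "0 \<le> posterior n f q i x" "posterior n f q i x \<le> 1"
  using term_le[OF assms] unfolding posterior_def
  by (auto intro: divide_nonneg_nonneg simp: divide_le_eq_1)

definition "Bt = (\<Sum>i=1..n. \<bar>\<beta> i\<bar>)"

lemma Y_bound: assumes x: "x \<in> {a..b}"
  shows "\<bar>\<Sum>i=1..n. \<beta> i * posterior n f q i x\<bar> \<le> Bt"
proof -
  have "\<bar>\<Sum>i=1..n. \<beta> i * posterior n f q i x\<bar> \<le> (\<Sum>i=1..n. \<bar>\<beta> i * posterior n f q i x\<bar>)"
    by (rule sum_abs)
  also have "\<dots> \<le> (\<Sum>i=1..n. \<bar>\<beta> i\<bar>)"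
  proof (rule sum_mono)
    fix i assume "i \<in> {1..n}"
    then have "0 \<le> posterior n f q i x" "posterior n f q i x \<le> 1" using post01[OF x] by auto
    then show "\<bar>\<beta> i * posterior n f q i x\<bar> \<le> \<bar>\<beta> i\<bar>"
      by (simp add: abs_mult mult_left_le)
  qed
  finally show ?thesis unfolding Bt_def .
qed

definition "AA x = (\<Sum>i=1..n. \<beta> i * (prior n q i * f i x))"

lemma YM: assumes x: "x \<in> {a..b}"
  shows "(\<Sum>i=1..n. \<beta> i * posterior n f q i x) * mix n f q x = AA x"
proof (cases "mix n f q x = 0")
  case True
  have "\<forall>j\<in>{..n}. prior n q j * f j x = 0"
    using True sum_nonneg_eq_0_iff[of "{..n}" "\<lambda>j. prior n q j * f j x"] term_le[OF x] unfolding mix_eq by auto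
  then have "AA x = 0" unfolding AA_def by (intro sum.neutral) auto
  then show ?thesis using True by simp
next
  case False
  then show ?thesis unfolding AA_def posterior_def
    by (simp add: sum_distrib_right)
qed

lemma mix_int: "set_integrable lborel {a..b} (mix n f q)" "(LINT x:{a..b}|lborel. mix n f q x) = 1"
proof -
  have i: "\<And>j. j \<in> {..n} \<Longrightarrow> set_integrable lborel {a..b} (\<lambda>x. prior n q j * f j x)"
    using expD(3)[OF F] by auto
  show "set_integrable lborel {a..b} (mix n f q)" unfolding mix_eq[abs_def] by (rule si_sum(2)[OF _ i]) auto
  have "(LINT x:{a..b}|lborel. mix n f q x) = (\<Sum>j\<le>n. LINT x:{a..b}|lborel. prior n q j * f j x)"
    unfolding mix_eq by (rule si_sum(1)[OF _ i]) auto
  also have "\<dots> = (\<Sum>j\<le>n. prior n q j)" using expD(4)[OF F] by simp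
  finally show "(LINT x:{a..b}|lborel. mix n f q x) = 1" using prior_sum by simp
qed

lemma AA_int: "set_integrable lborel {a..b} AA" "(LINT x:{a..b}|lborel. AA x) = (\<Sum>i=1..n. \<beta> i * q i)"
proof -
  have i: "\<And>i. i \<in> {1..n} \<Longrightarrow> set_integrable lborel {a..b} (\<lambda>x. \<beta> i * (prior n q i * f i x))"
    using expD(3)[OF F] by auto
  show "set_integrable lborel {a..b} AA" unfolding AA_def[abs_def] by (rule si_sum(2)[OF _ i]) auto
  have "(LINT x:{a..b}|lborel. AA x) = (\<Sum>i=1..n. LINT x:{a..b}|lborel. \<beta> i * (prior n q i * f i x))"
    unfolding AA_def by (rule si_sum(1)[OF _ i]) auto
  also have "\<dots> = (\<Sum>i=1..n. \<beta> i * q i)" using expD(4)[OF F] by (intro sum.cong) (auto simp: prior_def)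
  finally show "(LINT x:{a..b}|lborel. AA x) = (\<Sum>i=1..n. \<beta> i * q i)" .
qed

lemma phi_int:
  assumes P: "continuous_on UNIV P"
  shows "set_integrable lborel {a..b} (\<lambda>x. P (\<Sum>i=1..n. \<beta> i * posterior n f q i x) * mix n f q x)"
proof -
  have "compact (P ` {-Bt..Bt})" by (rule compact_continuous_image[OF continuous_on_subset[OF P] compact_Icc]) auto
  then obtain K where K: "\<And>y. y \<in> P ` {-Bt..Bt} \<Longrightarrow> norm y \<le> K"
    using compact_imp_bounded bounded_iff by metis
  show ?thesis
  proof (rule si_bound[OF mix_int(1), where K=K])
    show "(\<lambda>x. P (\<Sum>i=1..n. \<beta> i * posterior n f q i x) * mix n f q x) \<in> borel_measurable lborel"
      using Y_meas mix_meas borel_measurable_continuous_onI[OF P] by measurable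
    fix x assume x: "x \<in> {a..b}"
    have "\<bar>\<Sum>i=1..n. \<beta> i * posterior n f q i x\<bar> \<le> Bt" by (rule Y_bound[OF x])
    then have "\<bar>P (\<Sum>i=1..n. \<beta> i * posterior n f q i x)\<bar> \<le> K" using K by (auto simp: abs_le_iff)
    then show "\<bar>P (\<Sum>i=1..n. \<beta> i * posterior n f q i x) * mix n f q x\<bar> \<le> K * mix n f q x"
      using mix_nn[OF x] by (simp add: abs_mult mult_right_mono)
  qed auto
qed

end

context
  fixes n a b f q and \<beta> :: "nat \<Rightarrow> real"
  assumes F: "is_experiment n a b f" and q: "q \<in> prior_set n"
begin

lemma phi_affine:
  "lcx_expect n a b f q \<beta> (\<lambda>t. \<alpha> + \<gamma> * t) = \<alpha> + \<gamma> * (\<Sum>i=1..n. \<beta> i * q i)"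
proof -
  have "lcx_expect n a b f q \<beta> (\<lambda>t. \<alpha> + \<gamma> * t) = (LINT x:{a..b}|lborel. \<alpha> * mix n f q x + \<gamma> * AA n f q \<beta> x)"
    unfolding lcx_expect_def
  proof (rule set_lebesgue_integral_cong)
    show "\<forall>x. x \<in> {a..b} \<longrightarrow> (\<alpha> + \<gamma> * (\<Sum>i = 1..n. \<beta> i * posterior n f q i x)) * mix n f q x = \<alpha> * mix n f q x + \<gamma> * AA n f q \<beta> x"
      using YM[OF F q] by (auto simp: algebra_simps)
  qed simp
  also have "\<dots> = \<alpha> * (LINT x:{a..b}|lborel. mix n f q x) + \<gamma> * (LINT x:{a..b}|lborel. AA n f q \<beta> x)"
    using mix_int(1)[OF F q] AA_int(1)[OF F q, of \<beta>] by (subst set_integral_add) auto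
  finally show ?thesis using mix_int(2)[OF F q] AA_int(2)[OF F q] by simp
qed

lemma phi_hinge:
  "lcx_expect n a b f q \<beta> (\<lambda>t. max 0 (t - s)) = sig n a b f (\<lambda>j. prior n q j * ((if j = 0 then 0 else \<beta> j) - s))"
  unfolding lcx_expect_def sig_def
proof (rule set_lebesgue_integral_cong)
  show "\<forall>x. x \<in> {a..b} \<longrightarrow> max 0 ((\<Sum>i = 1..n. \<beta> i * posterior n f q i x) - s) * mix n f q x =
     max 0 (\<Sum>j\<le>n. prior n q j * ((if j = 0 then 0 else \<beta> j) - s) * f j x)"
  proof (intro allI impI)
    fix x assume x: "x \<in> {a..b}"
    let ?Y = "\<Sum>i = 1..n. \<beta> i * posterior n f q i x"
    let ?M = "mix n f q x"
    have M0: "0 \<le> ?M" by (rule mix_nn[OF F q x])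
    have "max 0 (?Y - s) * ?M = max 0 ((?Y - s) * ?M)" using M0
      by (cases "?Y - s \<le> 0") (auto simp: max_def mult_le_0_iff zero_le_mult_iff)
    also have "(?Y - s) * ?M = AA n f q \<beta> x - s * ?M" using YM[OF F q x] by (simp add: algebra_simps)
    also have "AA n f q \<beta> x - s * ?M = (\<Sum>j\<le>n. prior n q j * ((if j = 0 then 0 else \<beta> j) - s) * f j x)"
    proof -
      have "(\<Sum>j\<le>n. prior n q j * ((if j = 0 then 0 else \<beta> j) - s) * f j x) =
            (\<Sum>j\<le>n. (if j = 0 then 0 else \<beta> j) * (prior n q j * f j x)) - s * (\<Sum>j\<le>n. prior n q j * f j x)"
        by (simp add: sum_subtractf sum_distrib_left algebra_simps)
      also have "(\<Sum>j\<le>n. (if j = 0 then 0 else \<beta> j) * (prior n q j * f j x)) = AA n f q \<beta> x"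
      proof -
        have "(\<Sum>j=1..n. (if j = 0 then 0 else \<beta> j) * (prior n q j * f j x)) = (\<Sum>j=1..n. \<beta> j * (prior n q j * f j x))"
          by (intro sum.cong) auto
        then show ?thesis unfolding sum_split0[of "\<lambda>j. (if j = 0 then 0 else \<beta> j) * (prior n q j * f j x)"] AA_def[OF F q]
          by simp
      qed
      finally show ?thesis unfolding mix_eq[OF F q] by simp
    qed
    finally show "max 0 (?Y - s) * ?M = max 0 (\<Sum>j\<le>n. prior n q j * ((if j = 0 then 0 else \<beta> j) - s) * f j x)" .
  qed
qed simp

lemma phi_comb:
  fixes c s :: "nat \<Rightarrow> real"
  shows "lcx_expect n a b f q \<beta> (\<lambda>t. \<alpha> + \<gamma> * t + (\<Sum>k<N. c k * max 0 (t - s k))) =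
     lcx_expect n a b f q \<beta> (\<lambda>t. \<alpha> + \<gamma> * t) + (\<Sum>k<N. c k * lcx_expect n a b f q \<beta> (\<lambda>t. max 0 (t - s k)))"
proof -
  let ?Y = "\<lambda>x. \<Sum>i = 1..n. \<beta> i * posterior n f q i x"
  let ?M = "mix n f q"
  have ca: "continuous_on UNIV (\<lambda>t::real. \<alpha> + \<gamma> * t)" by (intro continuous_intros)
  have ch: "continuous_on UNIV (\<lambda>t::real. max 0 (t - s k))" for k by (intro continuous_intros)
  have i1: "set_integrable lborel {a..b} (\<lambda>x. (\<alpha> + \<gamma> * ?Y x) * ?M x)"
    using phi_int[OF F q ca, of \<beta>] by simp
  have i2: "set_integrable lborel {a..b} (\<lambda>x. c k * (max 0 (?Y x - s k) * ?M x))" for k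
    using phi_int[OF F q ch[of k], of \<beta>] by simp
  have e: "(\<alpha> + \<gamma> * ?Y x + (\<Sum>k<N. c k * max 0 (?Y x - s k))) * ?M x =
     (\<alpha> + \<gamma> * ?Y x) * ?M x + (\<Sum>k<N. c k * (max 0 (?Y x - s k) * ?M x))" for x
    by (simp only: distrib_right sum_distrib_right mult.assoc)
  have "lcx_expect n a b f q \<beta> (\<lambda>t. \<alpha> + \<gamma> * t + (\<Sum>k<N. c k * max 0 (t - s k))) =
     (LINT x:{a..b}|lborel. (\<alpha> + \<gamma> * ?Y x) * ?M x + (\<Sum>k<N. c k * (max 0 (?Y x - s k) * ?M x)))"
    unfolding lcx_expect_def e ..
  also have "\<dots> = (LINT x:{a..b}|lborel. (\<alpha> + \<gamma> * ?Y x) * ?M x) + (LINT x:{a..b}|lborel. (\<Sum>k<N. c k * (max 0 (?Y x - s k) * ?M x)))"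
    by (rule set_integral_add(2)[OF i1 si_sum(2)]) (use i2 in auto)
  also have "(LINT x:{a..b}|lborel. (\<Sum>k<N. c k * (max 0 (?Y x - s k) * ?M x))) = (\<Sum>k<N. LINT x:{a..b}|lborel. c k * (max 0 (?Y x - s k) * ?M x))"
    by (rule si_sum(1)) (use i2 in auto)
  finally show ?thesis unfolding lcx_expect_def by simp
qed

lemma phi_close:
  assumes P1: "continuous_on UNIV P1" and P2: "continuous_on UNIV P2"
    and cl: "\<And>t. \<bar>t\<bar> \<le> Bt n \<beta> \<Longrightarrow> \<bar>P1 t - P2 t\<bar> \<le> \<epsilon>"
  shows "\<bar>lcx_expect n a b f q \<beta> P1 - lcx_expect n a b f q \<beta> P2\<bar> \<le> \<epsilon>"
proof -
  let ?Y = "\<lambda>x. \<Sum>i = 1..n. \<beta> i * posterior n f q i x"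
  let ?M = "mix n f q"
  have i1: "set_integrable lborel {a..b} (\<lambda>x. P1 (?Y x) * ?M x)" by (rule phi_int[OF F q P1])
  have i2: "set_integrable lborel {a..b} (\<lambda>x. P2 (?Y x) * ?M x)" by (rule phi_int[OF F q P2])
  have iM: "set_integrable lborel {a..b} (\<lambda>x. \<epsilon> * ?M x)" using mix_int(1)[OF F q] by simp
  have d: "lcx_expect n a b f q \<beta> P1 - lcx_expect n a b f q \<beta> P2 = (LINT x:{a..b}|lborel. (P1 (?Y x) - P2 (?Y x)) * ?M x)"
    unfolding lcx_expect_def using i1 i2 by (subst set_integral_diff(2)[symmetric]) (auto simp: algebra_simps)
  have id: "set_integrable lborel {a..b} (\<lambda>x. (P1 (?Y x) - P2 (?Y x)) * ?M x)"
    using set_integral_diff(1)[OF i1 i2] by (simp add: algebra_simps)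
  have pt: "\<bar>(P1 (?Y x) - P2 (?Y x)) * ?M x\<bar> \<le> \<epsilon> * ?M x" if x: "x \<in> {a..b}" for x
  proof -
    have "\<bar>P1 (?Y x) - P2 (?Y x)\<bar> \<le> \<epsilon>" by (rule cl[OF Y_bound[OF F q x]])
    then show ?thesis using mix_nn[OF F q x] by (simp add: abs_mult mult_right_mono)
  qed
  have up: "(LINT x:{a..b}|lborel. (P1 (?Y x) - P2 (?Y x)) * ?M x) \<le> (LINT x:{a..b}|lborel. \<epsilon> * ?M x)"
    by (rule set_integral_mono[OF id iM]) (use pt in \<open>auto simp: abs_le_iff\<close>)
  have iM': "set_integrable lborel {a..b} (\<lambda>x. (- \<epsilon>) * ?M x)"
    by (rule set_integrable_mult_right) (rule mix_int(1)[OF F q])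
  have lo: "(LINT x:{a..b}|lborel. (- \<epsilon>) * ?M x) \<le> (LINT x:{a..b}|lborel. (P1 (?Y x) - P2 (?Y x)) * ?M x)"
  proof (rule set_integral_mono[OF iM' id])
    fix x assume "x \<in> {a..b}"
    from pt[OF this] show "(- \<epsilon>) * ?M x \<le> (P1 (?Y x) - P2 (?Y x)) * ?M x" by (simp add: abs_le_iff)
  qed
  have "(LINT x:{a..b}|lborel. \<epsilon> * ?M x) = \<epsilon> * (LINT x:{a..b}|lborel. ?M x)"
    by (rule set_integral_mult_right)
  then have U1: "(LINT x:{a..b}|lborel. \<epsilon> * ?M x) = \<epsilon>" using mix_int(2)[OF F q] by simp
  have "(LINT x:{a..b}|lborel. (- \<epsilon>) * ?M x) = (- \<epsilon>) * (LINT x:{a..b}|lborel. ?M x)"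
    by (rule set_integral_mult_right)
  then have U2: "(LINT x:{a..b}|lborel. (- \<epsilon>) * ?M x) = - \<epsilon>" using mix_int(2)[OF F q] by simp
  have A1: "(LINT x:{a..b}|lborel. (P1 (?Y x) - P2 (?Y x)) * ?M x) \<le> \<epsilon>" using up unfolding U1 .
  have A2: "- \<epsilon> \<le> (LINT x:{a..b}|lborel. (P1 (?Y x) - P2 (?Y x)) * ?M x)" using lo unfolding U2 .
  show ?thesis unfolding d abs_le_iff using A1 A2 by auto
qed

end

lemma sig_LB:
  assumes F: "is_experiment n a b f" and G: "is_experiment n c d g"
    and S: "\<And>w. sig n c d g w \<le> sig n a b f w"
  shows "LB_ge n a b f c d g"
  unfolding LB_ge_def
proof (intro ballI allI impI)
  fix q \<beta> C assume q: "q \<in> prior_set n" and conv: "convex_on UNIV (C :: real \<Rightarrow> real)"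
  have Cc: "continuous_on UNIV C" by (rule convex_on_continuous[OF open_UNIV conv])
  define L where "L = - Bt n \<beta> - 1"
  define U where "U = Bt n \<beta> + 1"
  have Bt0: "0 \<le> Bt n \<beta>" unfolding Bt_def[OF F q] by (intro sum_nonneg) auto
  have LU: "L < U" unfolding L_def U_def using Bt0 by simp
  show "lcx_expect n c d g q \<beta> C \<le> lcx_expect n a b f q \<beta> C"
  proof (rule field_le_epsilon)
    fix e :: real assume e: "0 < e"
    obtain \<alpha> \<gamma> N cc s where cc: "\<forall>k<(N::nat). 0 \<le> cc k"
      and ap: "\<forall>t\<in>{L..U}. \<bar>C t - (\<alpha> + \<gamma> * t + (\<Sum>k<N. cc k * max 0 (t - s k)))\<bar> \<le> e / 2"
      using approx_convex[OF conv LU, of "e/2"] e by auto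
    define P where "P = (\<lambda>t. \<alpha> + \<gamma> * t + (\<Sum>k<N. cc k * max 0 (t - s k)))"
    have Pc: "continuous_on UNIV P" unfolding P_def by (intro continuous_intros)
    have cl: "\<bar>C t - P t\<bar> \<le> e / 2" if "\<bar>t\<bar> \<le> Bt n \<beta>" for t
      using ap that unfolding P_def L_def U_def by (auto simp: abs_le_iff)
    have cl': "\<bar>P t - C t\<bar> \<le> e / 2" if "\<bar>t\<bar> \<le> Bt n \<beta>" for t
      using cl[OF that] by (simp add: abs_minus_commute)
    have g1: "\<bar>lcx_expect n c d g q \<beta> C - lcx_expect n c d g q \<beta> P\<bar> \<le> e / 2"
      by (rule phi_close[OF G q Cc Pc cl])
    have f1: "\<bar>lcx_expect n a b f q \<beta> P - lcx_expect n a b f q \<beta> C\<bar> \<le> e / 2"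
      by (rule phi_close[OF F q Pc Cc cl'])
    have mid: "lcx_expect n c d g q \<beta> P \<le> lcx_expect n a b f q \<beta> P"
      unfolding P_def phi_comb[OF F q] phi_comb[OF G q] phi_affine[OF F q] phi_affine[OF G q]
        phi_hinge[OF F q] phi_hinge[OF G q]
      using S cc by (intro add_left_mono sum_mono mult_left_mono) auto
    show "lcx_expect n c d g q \<beta> C \<le> lcx_expect n a b f q \<beta> C + e"
      using abs_le_D1[OF g1] abs_le_D1[OF f1] mid by linarith
  qed
qed


theorem proposition3:
  fixes n :: nat and a b c d :: real and f g :: "nat \<Rightarrow> real \<Rightarrow> real"
  assumes "is_experiment n a b f" and "is_experiment n c d g"
  shows "LB_ge n a b f c d g \<longleftrightarrow> lorenz_zonoid n c d g \<subseteq> lorenz_zonoid n a b f"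
proof
  assume LB: "LB_ge n a b f c d g"
  note F = assms(1) and G = assms(2)
  show "lorenz_zonoid n c d g \<subseteq> lorenz_zonoid n a b f"
  proof
    fix v assume "v \<in> lorenz_zonoid n c d g"
    then obtain h where v: "v = map (\<lambda>i. LINT x:{c..d}|lborel. h x * g i x) [0..<Suc n]"
      and hm: "h \<in> borel_measurable lborel" and hb: "\<forall>x\<in>{c..d}. 0 \<le> h x \<and> h x \<le> 1"
      unfolding lorenz_zonoid_def by blast
    define z where "z i = zv c d g h i" for i
    have hz: "(\<Sum>j\<le>n. w j * z j) \<le> sig n a b f w" for w
    proof -
      have "(\<Sum>j\<le>n. w j * z j) \<le> sig n c d g w" unfolding z_def
        by (rule supp_le[OF G hm]) (use hb in auto)
      also have "\<dots> \<le> sig n a b f w" by (rule LB_sig[OF F G LB])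
      finally show ?thesis .
    qed
    obtain h' where h': "h' \<in> HH" and eq: "\<forall>j\<le>n. zv a b f h' j = z j"
      using point_in[OF F hz] by blast
    have "v = map (\<lambda>i. LINT x:{a..b}|lborel. h' x * f i x) [0..<Suc n]"
      unfolding v map_eq_conv using eq unfolding z_def zv_def by auto
    moreover have "h' \<in> borel_measurable lborel" "\<forall>x\<in>{a..b}. 0 \<le> h' x \<and> h' x \<le> 1"
      using h' unfolding HH_def by auto
    ultimately show "v \<in> lorenz_zonoid n a b f" unfolding lorenz_zonoid_def by blast
  qed
next
  assume inc: "lorenz_zonoid n c d g \<subseteq> lorenz_zonoid n a b f"
  show "LB_ge n a b f c d g"
    by (rule sig_LB[OF assms(1,2) zon_sig[OF assms(1,2) inc]])
qed

end
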